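(* If $a>0$ and $1<q<p$, then for every $\lambda>0$ the function $u=0$ is a strict local minimizer of $I^-_{\lambda,s}$ in $X_p^s$.
   Context: $\Omega\subset\mathbb{R}^N$ bounded smooth domain, $s\in(0,1)$, $p>1$, $N>sp$. $X_p^s=\{u\in W^{s,p}(\mathbb{R}^N): u=0 \text{ a.e. in } \mathbb{R}^N\setminus\Omega\}$ with norm $\|u\|_{X_p^s}=\big(\int_{\mathbb{R}^{2N}}\frac{|u(x)-u(y)|^p}{|x-y|^{N+sp}}dxdy\big)^{1/p}$. $u^-=\min\{u,0\}$ and $I^-_{\lambda,s}(u)=\frac1p\|u\|_{X_p^s}^p+\frac\lambda q\int_\Omega|u^-|^q-\frac ap\int_\Omega|u^-|^p$. *)

theory Defs
  imports "HOL-Analysis.Analysis"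
begin

text \<open>Euclidean space R^N is modelled by a euclidean_space type 'a, N = DIM('a).\<close>

definition gagliardo :: "real \<Rightarrow> real \<Rightarrow> ('a::euclidean_space \<Rightarrow> real) \<Rightarrow> ennreal" where
  "gagliardo s p u =
     (\<integral>\<^sup>+ z. ennreal (\<bar>u (fst z) - u (snd z)\<bar> powr p
                    / norm (fst z - snd z) powr (real DIM('a) + s * p))
        \<partial>(lebesgue \<Otimes>\<^sub>M lebesgue))"

definition Xsp :: "real \<Rightarrow> real \<Rightarrow> 'a::euclidean_space set \<Rightarrow> ('a \<Rightarrow> real) set" where
  "Xsp s p \<Omega> = {u. u \<in> borel_measurable lebesgue
                    \<and> (\<integral>\<^sup>+ x. ennreal (\<bar>u x\<bar> powr p) \<partial>lebesgue) < \<infinity>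
                    \<and> gagliardo s p u < \<infinity>
                    \<and> (AE x in lebesgue. x \<notin> \<Omega> \<longrightarrow> u x = 0)}"

definition Xnorm :: "real \<Rightarrow> real \<Rightarrow> ('a::euclidean_space \<Rightarrow> real) \<Rightarrow> real" where
  "Xnorm s p u = enn2real (gagliardo s p u) powr (1 / p)"

definition neg_part :: "real \<Rightarrow> real" where
  "neg_part t = min t 0"

definition Iminus :: "real \<Rightarrow> real \<Rightarrow> real \<Rightarrow> real \<Rightarrow> real \<Rightarrow> 'a::euclidean_space set
                      \<Rightarrow> ('a \<Rightarrow> real) \<Rightarrow> real" where
  "Iminus s p q a lam \<Omega> u =
     (1 / p) * Xnorm s p u powr p
     + (lam / q) * (LINT x:\<Omega>|lebesgue. \<bar>neg_part (u x)\<bar> powr q)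
     - (a / p) * (LINT x:\<Omega>|lebesgue. \<bar>neg_part (u x)\<bar> powr p)"

end

theory Submission
  imports Defs
begin

lemma sigma_finite_lebesgue: "sigma_finite_measure (lebesgue :: 'a::euclidean_space measure)"
proof -
  obtain A :: "'a set set" where A: "countable A" "A \<subseteq> sets lborel" "\<Union>A = space lborel" "\<forall>a\<in>A. emeasure lborel a \<noteq> \<infinity>"
    using sigma_finite_lborel unfolding sigma_finite_measure_def by blast
  show ?thesis unfolding sigma_finite_measure_def
    apply (rule exI[of _ A])
    using A by (auto simp: emeasure_completion)
qed

lemma id_lebesgue_meas[measurable]: "(\<lambda>x::'a::euclidean_space. x) \<in> borel_measurable lebesgue"
  by (simp add: measurable_completion)

lemma gag_meas:
  fixes f :: "'a::euclidean_space \<Rightarrow> real"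
  assumes [measurable]: "f \<in> borel_measurable lebesgue"
  shows "(\<lambda>z. ennreal (\<bar>f (fst z) - f (snd z)\<bar> powr p / norm (fst z - snd z) powr c)) \<in> borel_measurable (lebesgue \<Otimes>\<^sub>M lebesgue)"
proof -
  have [measurable]: "fst \<in> borel_measurable (lebesgue \<Otimes>\<^sub>M (lebesgue::'a measure))"
    using measurable_compose[OF measurable_fst id_lebesgue_meas] by simp
  have [measurable]: "snd \<in> borel_measurable (lebesgue \<Otimes>\<^sub>M (lebesgue::'a measure))"
    using measurable_compose[OF measurable_snd id_lebesgue_meas] by simp
  show ?thesis by measurable
qed

lemma ball_emeas: "r \<ge> 0 \<Longrightarrow> emeasure lebesgue (ball (x::'a::euclidean_space) r) = ennreal (unit_ball_vol (DIM('a)) * r ^ DIM('a))"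
  using emeasure_ball[where c=x and r=r] by (simp add: emeasure_completion)
lemma ball_meas: "r \<ge> 0 \<Longrightarrow> measure lebesgue (ball (x::'a::euclidean_space) r) = unit_ball_vol (DIM('a)) * r ^ DIM('a)"
  unfolding measure_def by (subst ball_emeas) auto
lemma ball_meas_eq:
  fixes x :: "'a::euclidean_space"
  assumes "r \<ge> 0"
  shows "emeasure lebesgue (ball x r) = ennreal (measure lebesgue (ball (0::'a) r))"
  using assms by (simp add: ball_emeas ball_meas del: measure_completion emeasure_completion)
lemma Vpos: "r > 0 \<Longrightarrow> measure lebesgue (ball (0::'a::euclidean_space) r) > 0"
  by (simp add: ball_meas del: measure_completion emeasure_completion)
lemma keyL:
  fixes f :: "'a::euclidean_space \<Rightarrow> real"
  assumes f[measurable]: "f \<in> borel_measurable lebesgue" and rho: "\<rho> > 0" and p: "p > 0" and sp: "s*p \<ge> 0"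
    and S: "emeasure lebesgue {x. f x \<noteq> 0} \<le> ennreal (measure lebesgue (ball (0::'a) \<rho>) / 2)"
  shows "(\<integral>\<^sup>+x. ennreal (\<bar>f x\<bar> powr p) \<partial>lebesgue)
     \<le> ennreal (2 * \<rho> powr (real DIM('a) + s*p) / measure lebesgue (ball (0::'a) \<rho>)) * gagliardo s p f"
proof -
  define V where "V = measure lebesgue (ball (0::'a) \<rho>)"
  define b where "b = real DIM('a) + s*p"
  have bpos: "b > 0" using sp DIM_positive[where 'a='a] unfolding b_def by linarith
  have Vpos: "V > 0" unfolding V_def using rho by (rule Vpos)
  define F where "F = (\<lambda>z. ennreal (\<bar>f (fst z) - f (snd z)\<bar> powr p / norm (fst z - snd z) powr b))"
  have Fm: "F \<in> borel_measurable (lebesgue \<Otimes>\<^sub>M lebesgue)" unfolding F_def by (rule gag_meas[OF f])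
  define S where "S = {x. f x \<noteq> 0}"
  have Sm: "S \<in> sets lebesgue"
  proof -
    have "{x \<in> space lebesgue. f x \<noteq> 0} \<in> sets lebesgue" by measurable
    then show ?thesis unfolding S_def by simp
  qed
  have pt: "ennreal (\<bar>f x\<bar> powr p) \<le> ennreal (2 * \<rho> powr b / V) * (\<integral>\<^sup>+y. F (x,y) \<partial>lebesgue)" for x
  proof (cases "f x = 0")
    case True then show ?thesis by simp
  next
    case False
    define B where "B = ball x \<rho> - S"
    have Bm: "B \<in> sets lebesgue" unfolding B_def using Sm by auto
    have "ennreal V = emeasure lebesgue (ball x \<rho>)" using ball_meas_eq[of \<rho> x] rho V_def by simp
    also have "\<dots> \<le> emeasure lebesgue (B \<union> S)" using Bm Sm by (intro emeasure_mono) (auto simp: B_def)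
    also have "\<dots> \<le> emeasure lebesgue B + emeasure lebesgue S" using Bm Sm by (rule emeasure_subadditive)
    also have "\<dots> \<le> emeasure lebesgue B + ennreal (V/2)" using S unfolding S_def V_def by (simp add: add_left_mono)
    finally have VB: "ennreal V \<le> emeasure lebesgue B + ennreal (V/2)" .
    have EB: "ennreal (V/2) \<le> emeasure lebesgue B"
    proof -
      have "ennreal V = ennreal (V/2) + ennreal (V/2)" using Vpos by (simp flip: ennreal_plus)
      with VB have "ennreal (V/2) + ennreal (V/2) \<le> emeasure lebesgue B + ennreal (V/2)" by simp
      then have "ennreal (V/2) + ennreal (V/2) \<le> ennreal (V/2) + emeasure lebesgue B" by (simp add: add.commute)
      then show ?thesis by (simp add: ennreal_add_left_cancel_le del: ennreal_plus)
    qed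
    have "ennreal (\<bar>f x\<bar> powr p / \<rho> powr b) * ennreal (V/2)
        \<le> ennreal (\<bar>f x\<bar> powr p / \<rho> powr b) * emeasure lebesgue B"
      using EB by (intro mult_left_mono) auto
    also have "\<dots> = (\<integral>\<^sup>+y. ennreal (\<bar>f x\<bar> powr p / \<rho> powr b) * indicator B y \<partial>lebesgue)"
      using Bm by (simp add: nn_integral_cmult_indicator)
    also have "\<dots> \<le> (\<integral>\<^sup>+y. F (x,y) \<partial>lebesgue)"
    proof (intro nn_integral_mono)
      fix y
      show "ennreal (\<bar>f x\<bar> powr p / \<rho> powr b) * indicator B y \<le> F (x, y)"
      proof (cases "y \<in> B")
        case True
        then have fy: "f y = 0" and d: "dist x y < \<rho>" by (auto simp: B_def S_def)
        have "y \<noteq> x" using fy False by auto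
        then have np: "norm (x - y) > 0" by simp
        have "norm (x - y) powr b \<le> \<rho> powr b"
          using d np bpos by (intro powr_mono2) (auto simp: dist_norm)
        then have "\<bar>f x\<bar> powr p / \<rho> powr b \<le> \<bar>f x - f y\<bar> powr p / norm (x - y) powr b"
          proof -
          have "0 < \<rho> powr b * norm (x - y) powr b" using rho np by simp
          then show ?thesis using fy divide_left_mono[of "norm (x - y) powr b" "\<rho> powr b" "\<bar>f x\<bar> powr p"] \<open>norm (x - y) powr b \<le> \<rho> powr b\<close> by simp
        qed
        then show ?thesis using True by (simp add: F_def)
      qed simp
    qed
    finally have I: "ennreal (\<bar>f x\<bar> powr p / \<rho> powr b) * ennreal (V/2) \<le> (\<integral>\<^sup>+y. F (x,y) \<partial>lebesgue)" .
    have "ennreal (\<bar>f x\<bar> powr p) = ennreal (2 * \<rho> powr b / V) * (ennreal (\<bar>f x\<bar> powr p / \<rho> powr b) * ennreal (V/2))"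
      using Vpos rho by (simp add: ennreal_mult'[symmetric] ennreal_mult[symmetric] field_simps)
    also have "\<dots> \<le> ennreal (2 * \<rho> powr b / V) * (\<integral>\<^sup>+y. F (x,y) \<partial>lebesgue)"
      using I by (intro mult_left_mono) auto
    finally show ?thesis .
  qed
  have "(\<integral>\<^sup>+x. ennreal (\<bar>f x\<bar> powr p) \<partial>lebesgue) \<le> (\<integral>\<^sup>+x. ennreal (2 * \<rho> powr b / V) * (\<integral>\<^sup>+y. F (x,y) \<partial>lebesgue) \<partial>lebesgue)"
    by (intro nn_integral_mono pt)
  also have "\<dots> = ennreal (2 * \<rho> powr b / V) * (\<integral>\<^sup>+x. (\<integral>\<^sup>+y. F (x,y) \<partial>lebesgue) \<partial>lebesgue)"
    using Fm sigma_finite_measure.borel_measurable_nn_integral_fst[OF sigma_finite_lebesgue Fm]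
    by (intro nn_integral_cmult) simp
  also have "(\<integral>\<^sup>+x. (\<integral>\<^sup>+y. F (x,y) \<partial>lebesgue) \<partial>lebesgue) = gagliardo s p f"
    unfolding gagliardo_def F_def b_def
    by (rule sigma_finite_measure.nn_integral_fst[OF sigma_finite_lebesgue gag_meas[OF f]])
  finally show ?thesis unfolding V_def b_def .
qed


lemma ptw:
  fixes w M p q :: real
  assumes w: "0 \<le> w" and M: "0 < M" and q: "0 < q" and qp: "q < p"
  shows "w powr p \<le> 2 powr p * M powr (p-q) * w powr q + 2 powr p * (max (w-M) 0) powr p"
proof -
  have p: "p > 0" using q qp by simp
  have t1: "0 \<le> 2 powr p * M powr (p-q) * w powr q" by simp
  have t2: "0 \<le> 2 powr p * (max (w-M) 0) powr p" by simp
  have one: "1 \<le> 2 powr p" using p by (simp add: ge_one_powr_ge_zero)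
  consider "w \<le> M" | "M < w \<and> w \<le> 2*M" | "2*M < w" by linarith
  then show ?thesis
  proof cases
    case 1
    have "w powr p = w powr (p-q) * w powr q" by (simp flip: powr_add)
    also have "\<dots> \<le> M powr (p-q) * w powr q"
      using 1 w qp by (intro mult_right_mono powr_mono2) auto
    also have "\<dots> \<le> 2 powr p * M powr (p-q) * w powr q"
      using one mult_right_mono[OF one, of "M powr (p-q) * w powr q"] by (simp add: mult.assoc)
    finally show ?thesis using t2 by linarith
  next
    case 2
    have "w powr p \<le> (2*M) powr p" using 2 w p by (intro powr_mono2) auto
    also have "\<dots> = 2 powr p * (M powr (p-q) * M powr q)" using M by (simp add: powr_mult flip: powr_add)
    also have "\<dots> \<le> 2 powr p * (M powr (p-q) * w powr q)"
      using 2 M q by (intro mult_left_mono powr_mono2) auto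
    finally show ?thesis using t2 by (simp add: mult.assoc add_increasing2)
  next
    case 3
    have "w powr p \<le> (2*(w-M)) powr p" using 3 w p M by (intro powr_mono2) auto
    also have "\<dots> = 2 powr p * (max (w-M) 0) powr p" using 3 M powr_mult[of 2 "w-M" p] by simp
    finally show ?thesis using t1 by linarith
  qed
qed

lemma gag_mono:
  fixes f g :: "'a::euclidean_space \<Rightarrow> real"
  assumes "\<And>x y. \<bar>g x - g y\<bar> \<le> \<bar>f x - f y\<bar>" and "p > 0"
  shows "gagliardo s p g \<le> gagliardo s p f"
  unfolding gagliardo_def
proof (intro nn_integral_mono ennreal_leI divide_right_mono)
  fix z :: "'a \<times> 'a"
  show "\<bar>g (fst z) - g (snd z)\<bar> powr p \<le> \<bar>f (fst z) - f (snd z)\<bar> powr p"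
    using assms by (intro powr_mono2) auto
qed simp


theorem lemma4p7:
  fixes \<Omega> :: "'a::euclidean_space set"
    and s p q a lam :: real
  assumes "open \<Omega>" and "connected \<Omega>" and "\<Omega> \<noteq> {}" and "bounded \<Omega>"
    and "0 < s" and "s < 1" and "1 < p" and "s * p < real DIM('a)"
    and "0 < a" and "1 < q" and "q < p" and "0 < lam"
  shows "\<exists>r>0. \<forall>u\<in>Xsp s p \<Omega>. 0 < Xnorm s p u \<and> Xnorm s p u < r
            \<longrightarrow> Iminus s p q a lam \<Omega> (\<lambda>x. 0) < Iminus s p q a lam \<Omega> u"
proof -
  note as = assms
  have p0: "p > 0" and q0: "q > 0" and sp0: "s*p > 0" using as by auto
  obtain d where d0: "d > 0" and dsub: "\<Omega> \<subseteq> ball (0::'a) d"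
    using bounded_subset_ballD[OF \<open>bounded \<Omega>\<close>] by blast
  have Om_meas: "\<Omega> \<in> sets lebesgue" using \<open>open \<Omega>\<close> by auto
  have Om_fin: "emeasure lebesgue \<Omega> < \<infinity>"
  proof -
    have "emeasure lebesgue \<Omega> \<le> emeasure lebesgue (ball (0::'a) d)" by (rule emeasure_mono[OF dsub]) simp
    also have "\<dots> < \<infinity>" using ball_emeas[of d "0::'a"] d0 by simp
    finally show ?thesis .
  qed
  define N where "N = real DIM('a)"
  define \<beta> where "\<beta> = N + s*p"
  define \<omega> where "\<omega> = unit_ball_vol N"
  have \<omega>0: "\<omega> > 0" unfolding \<omega>_def N_def by simp
  have Vball: "measure lebesgue (ball (0::'a) t) = \<omega> * t powr N" if "t > 0" for t
    using ball_meas[of t 0] that unfolding \<omega>_def N_def by (simp add: powr_realpow)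
  define R where "R = 2*d"
  define CR where "CR = 2 * R powr \<beta> / measure lebesgue (ball (0::'a) R)"
  have CR0: "CR > 0" unfolding CR_def R_def using d0 Vball[of "2*d"] \<omega>0 by simp
  define M where "M = (lam*p/(q*a*2 powr p)) powr (1/(p-q))"
  have M0: "M > 0" unfolding M_def using as by simp
  have MM: "M powr (p-q) = lam*p/(q*a*2 powr p)"
    unfolding M_def using as by (simp add: powr_powr)
  define \<rho> where "\<rho> = (\<omega>/(4*a*2 powr p)) powr (1/(s*p))"
  have rho0: "\<rho> > 0" unfolding \<rho>_def using as \<omega>0 by simp
  have rr: "\<rho> powr (s*p) = \<omega>/(4*a*2 powr p)"
    unfolding \<rho>_def using as \<omega>0 sp0 by (simp add: powr_powr)
  define K where "K = 2 * \<rho> powr \<beta> / measure lebesgue (ball (0::'a) \<rho>)"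
  have KK: "K = 1/(2*a*2 powr p)"
  proof -
    have "K = 2 * (\<rho> powr N * \<rho> powr (s*p)) / (\<omega> * \<rho> powr N)"
      unfolding K_def \<beta>_def using Vball[OF rho0] by (simp add: powr_add)
    also have "\<dots> = 2 * \<rho> powr (s*p) / \<omega>" using rho0 \<omega>0 by simp
    also have "\<dots> = 1/(2*a*2 powr p)" using rr \<omega>0 as by (simp add: field_simps)
    finally show ?thesis .
  qed
  have K0: "K \<ge> 0" using KK as by simp
  define Vr where "Vr = measure lebesgue (ball (0::'a) \<rho>)"
  have Vr0: "Vr > 0" unfolding Vr_def using Vpos[OF rho0] .
  define T where "T = M powr p * Vr / (2*CR)"
  have T0: "T > 0" unfolding T_def using M0 Vr0 CR0 by simp
  define r where "r = T powr (1/p)"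
  have r0: "r > 0" unfolding r_def using T0 by simp
  have rp: "r powr p = T" unfolding r_def using T0 p0 by (simp add: powr_powr)
  have I0: "Iminus s p q a lam \<Omega> (\<lambda>x. 0) = 0"
    by (simp add: Iminus_def Xnorm_def gagliardo_def neg_part_def)
  show ?thesis
  proof (intro exI[of _ r] conjI r0 ballI impI)
    fix u assume uX: "u \<in> Xsp s p \<Omega>" and un: "0 < Xnorm s p u \<and> Xnorm s p u < r"
    have um[measurable]: "u \<in> borel_measurable lebesgue"
      and ufin: "(\<integral>\<^sup>+ x. ennreal (\<bar>u x\<bar> powr p) \<partial>lebesgue) < \<infinity>"
      and gfin: "gagliardo s p u < \<infinity>"
      and uAE: "AE x in lebesgue. x \<notin> \<Omega> \<longrightarrow> u x = 0"
      using uX unfolding Xsp_def by auto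
    define X where "X = enn2real (gagliardo s p u)"
    have gX: "gagliardo s p u = ennreal X" unfolding X_def using gfin by simp
    have X0: "X \<ge> 0" unfolding X_def by simp
    have XN: "Xnorm s p u = X powr (1/p)" unfolding Xnorm_def X_def ..
    have XNp: "Xnorm s p u powr p = X" unfolding XN using X0 p0 by (simp add: powr_powr)
    have Xpos: "X > 0" using un XN X0 by (cases "X = 0") auto
    have XT: "X < T"
    proof -
      have "Xnorm s p u powr p < r powr p"
        using un p0 by (intro powr_less_mono2) auto
      then show ?thesis using XNp rp by simp
    qed
    have P: "(\<integral>\<^sup>+ x. ennreal (\<bar>u x\<bar> powr p) \<partial>lebesgue) \<le> ennreal (CR * X)"
    proof -
      have "emeasure lebesgue {x. u x \<noteq> 0} \<le> emeasure lebesgue (ball (0::'a) d)"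
        using uAE dsub by (intro emeasure_mono_AE) (auto elim!: eventually_mono)
      also have "\<dots> = ennreal (measure lebesgue (ball (0::'a) d))" by (rule ball_meas_eq) (use d0 in simp)
      also have "\<dots> = ennreal (\<omega> * d powr N)" using Vball[OF d0] by (simp only:)
      also have "\<dots> \<le> ennreal (measure lebesgue (ball (0::'a) R) / 2)"
      proof (intro ennreal_leI)
        have N1: "1 \<le> N" unfolding N_def using Suc_leI[OF DIM_positive[where 'a='a]] by simp
        have two: "2 \<le> (2::real) powr N" using powr_mono[OF N1, of 2] by simp
        have "\<omega> * d powr N * 2 \<le> \<omega> * d powr N * 2 powr N"
          using two d0 \<omega>0 by (intro mult_left_mono) auto
        also have "\<dots> = measure lebesgue (ball (0::'a) R)"
          unfolding R_def using Vball[of "2*d"] d0 by (simp add: powr_mult)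
        finally show "\<omega> * d powr N \<le> measure lebesgue (ball (0::'a) R) / 2" by simp
      qed
      finally have "emeasure lebesgue {x. u x \<noteq> 0} \<le> ennreal (measure lebesgue (ball (0::'a) R) / 2)" .
      from keyL[OF um _ p0 _ this] d0 sp0
      have "(\<integral>\<^sup>+x. ennreal (\<bar>u x\<bar> powr p) \<partial>lebesgue) \<le> ennreal CR * gagliardo s p u"
        unfolding CR_def \<beta>_def N_def R_def by simp
      also have "\<dots> = ennreal (CR * X)" using gX CR0 X0 by (simp add: ennreal_mult)
      finally show ?thesis .
    qed
    define h where "h = (\<lambda>x. max (- u x - M) 0)"
    have hm[measurable]: "h \<in> borel_measurable lebesgue" unfolding h_def by measurable
    have hS: "{x. h x \<noteq> 0} = {x. u x < -M}" unfolding h_def by auto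
    have Sm: "{x. u x < -M} \<in> sets lebesgue"
    proof -
      have "{x \<in> space lebesgue. u x < -M} \<in> sets lebesgue" by measurable
      then show ?thesis by simp
    qed
    have hmeas: "emeasure lebesgue {x. h x \<noteq> 0} \<le> ennreal (Vr / 2)"
    proof -
      have "ennreal (M powr p) * emeasure lebesgue {x. u x < -M}
          = (\<integral>\<^sup>+x. ennreal (M powr p) * indicator {x. u x < -M} x \<partial>lebesgue)"
        using Sm by (simp add: nn_integral_cmult_indicator)
      also have "\<dots> \<le> (\<integral>\<^sup>+ x. ennreal (\<bar>u x\<bar> powr p) \<partial>lebesgue)"
      proof (intro nn_integral_mono)
        fix x show "ennreal (M powr p) * indicator {x. u x < -M} x \<le> ennreal (\<bar>u x\<bar> powr p)"
          using M0 p0 by (cases "u x < -M") (auto intro!: ennreal_leI powr_mono2)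
      qed
      also have "\<dots> \<le> ennreal (CR * X)" by (rule P)
      finally have A: "ennreal (M powr p) * emeasure lebesgue {x. u x < -M} \<le> ennreal (CR * X)" .
      have "emeasure lebesgue {x. u x < -M} = ennreal (1 / M powr p) * (ennreal (M powr p) * emeasure lebesgue {x. u x < -M})"
        using M0 by (simp add: mult.assoc[symmetric] ennreal_mult[symmetric])
      also have "\<dots> \<le> ennreal (1 / M powr p) * ennreal (CR * X)" using A by (intro mult_left_mono) auto
      also have "\<dots> = ennreal (CR * X / M powr p)" using M0 CR0 X0 by (simp add: ennreal_mult[symmetric])
      also have "\<dots> \<le> ennreal (Vr / 2)"
      proof (intro ennreal_leI)
        have "CR * X \<le> CR * T" using XT CR0 by simp
        also have "\<dots> = M powr p * Vr / 2" unfolding T_def using CR0 by simp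
        finally show "CR * X / M powr p \<le> Vr / 2" using M0 by (simp add: field_simps)
      qed
      finally show ?thesis unfolding hS .
    qed
    have Hk: "(\<integral>\<^sup>+x. ennreal (\<bar>h x\<bar> powr p) \<partial>lebesgue) \<le> ennreal (K * X)"
    proof -
      have "(\<integral>\<^sup>+x. ennreal (\<bar>h x\<bar> powr p) \<partial>lebesgue) \<le> ennreal K * gagliardo s p h"
        using keyL[OF hm rho0 p0 _ hmeas[unfolded Vr_def]] sp0 unfolding K_def \<beta>_def N_def by simp
      also have "\<dots> \<le> ennreal K * gagliardo s p u"
        by (intro mult_left_mono gag_mono p0) (auto simp: h_def)
      also have "\<dots> = ennreal (K * X)" using gX X0 K0 by (simp add: ennreal_mult)
      finally show ?thesis .
    qed
    define w where "w = (\<lambda>x. \<bar>neg_part (u x)\<bar>)"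
    have wm[measurable]: "w \<in> borel_measurable lebesgue" unfolding w_def neg_part_def by measurable
    have w0: "w x \<ge> 0" for x unfolding w_def by simp
    have wu: "w x \<le> \<bar>u x\<bar>" for x unfolding w_def neg_part_def by auto
    have hw: "h x = max (w x - M) 0" for x unfolding h_def w_def neg_part_def using M0 by auto
    have int_u: "integrable lebesgue (\<lambda>x. \<bar>u x\<bar> powr p)"
      by (rule integrableI_nonneg) (use ufin in auto)
    have h0: "h x \<ge> 0" for x unfolding h_def by simp
    have hu: "h x \<le> \<bar>u x\<bar>" for x unfolding h_def using M0 by auto
    have int_h: "integrable lebesgue (\<lambda>x. h x powr p)"
    proof (rule Bochner_Integration.integrable_bound[OF int_u])
      show "(\<lambda>x. h x powr p) \<in> borel_measurable lebesgue" by measurable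
      show "AE x in lebesgue. norm (h x powr p) \<le> norm (\<bar>u x\<bar> powr p)"
      proof (intro AE_I2)
        fix x
        have "h x powr p \<le> \<bar>u x\<bar> powr p" using h0 hu p0 by (intro powr_mono2) auto
        then show "norm (h x powr p) \<le> norm (\<bar>u x\<bar> powr p)" by simp
      qed
    qed
    have int_wp: "integrable lebesgue (\<lambda>x. indicator \<Omega> x * w x powr p)"
    proof (rule Bochner_Integration.integrable_bound[OF int_u])
      show "(\<lambda>x. indicator \<Omega> x * w x powr p) \<in> borel_measurable lebesgue" using Om_meas by measurable
      show "AE x in lebesgue. norm (indicator \<Omega> x * w x powr p) \<le> norm (\<bar>u x\<bar> powr p)"
      proof (intro AE_I2)
        fix x
        have "w x powr p \<le> \<bar>u x\<bar> powr p" using w0 wu p0 by (intro powr_mono2) auto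
        then show "norm (indicator \<Omega> x * w x powr p) \<le> norm (\<bar>u x\<bar> powr p)"
          by (simp add: indicator_def)
      qed
    qed
    have int_wq: "integrable lebesgue (\<lambda>x. indicator \<Omega> x * w x powr q)"
    proof (rule Bochner_Integration.integrable_bound[OF Bochner_Integration.integrable_add[OF integrable_real_indicator[OF Om_meas Om_fin] int_u]])
      show "(\<lambda>x. indicator \<Omega> x * w x powr q) \<in> borel_measurable lebesgue" using Om_meas by measurable
      show "AE x in lebesgue. norm (indicator \<Omega> x * w x powr q) \<le> norm (indicator \<Omega> x + \<bar>u x\<bar> powr p)"
      proof (intro AE_I2)
        fix x
        have "w x powr q \<le> 1 + \<bar>u x\<bar> powr p"
        proof (cases "w x \<le> 1")
          case True
          then have "w x powr q \<le> 1" using w0 q0 powr_mono2[of q "w x" 1] by simp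
          moreover have "0 \<le> \<bar>u x\<bar> powr p" by simp
          ultimately show ?thesis by linarith
        next
          case False
          then have "w x powr q \<le> w x powr p" using as by (intro powr_mono) auto
          also have "\<dots> \<le> \<bar>u x\<bar> powr p" using wu w0 p0 by (intro powr_mono2) auto
          finally show ?thesis by simp
        qed
        then show "norm (indicator \<Omega> x * w x powr q) \<le> norm (indicator \<Omega> x + \<bar>u x\<bar> powr p)"
          by (simp add: indicator_def)
      qed
    qed
    define Ap where "Ap = (LINT x:\<Omega>|lebesgue. \<bar>neg_part (u x)\<bar> powr p)"
    define Aq where "Aq = (LINT x:\<Omega>|lebesgue. \<bar>neg_part (u x)\<bar> powr q)"
    define Hh where "Hh = (LINT x|lebesgue. h x powr p)"
    have Ap_eq: "Ap = (LINT x|lebesgue. indicator \<Omega> x * w x powr p)"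
      unfolding Ap_def set_lebesgue_integral_def w_def by simp
    have Aq_eq: "Aq = (LINT x|lebesgue. indicator \<Omega> x * w x powr q)"
      unfolding Aq_def set_lebesgue_integral_def w_def by simp
    have Aq0: "Aq \<ge> 0" unfolding Aq_eq by (intro integral_nonneg_AE) auto
    have HK: "Hh \<le> K * X"
    proof -
      have "Hh = enn2real (\<integral>\<^sup>+x. ennreal (h x powr p) \<partial>lebesgue)"
        unfolding Hh_def by (intro integral_eq_nn_integral) auto
      also have "(\<integral>\<^sup>+x. ennreal (h x powr p) \<partial>lebesgue) = (\<integral>\<^sup>+x. ennreal (\<bar>h x\<bar> powr p) \<partial>lebesgue)"
        using h0 by simp
      also have "enn2real (\<integral>\<^sup>+x. ennreal (\<bar>h x\<bar> powr p) \<partial>lebesgue) \<le> K * X"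
        by (rule enn2real_leI[OF _ Hk]) (use K0 X0 in simp)
      finally show ?thesis .
    qed
    have ApB: "Ap \<le> 2 powr p * M powr (p-q) * Aq + 2 powr p * Hh"
    proof -
      define c where "c = 2 powr p * M powr (p-q)"
      have c0: "c \<ge> 0" unfolding c_def by simp
      have i1: "integrable lebesgue (\<lambda>x. c * (indicator \<Omega> x * w x powr q))"
        using int_wq by (rule integrable_mult_right)
      have i2: "integrable lebesgue (\<lambda>x. 2 powr p * h x powr p)"
        using int_h by (rule integrable_mult_right)
      have "Ap \<le> (LINT x|lebesgue. c * (indicator \<Omega> x * w x powr q) + 2 powr p * h x powr p)"
        unfolding Ap_eq
      proof (intro integral_mono int_wp)
        show "integrable lebesgue (\<lambda>x. c * (indicator \<Omega> x * w x powr q) + 2 powr p * h x powr p)"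
          using i1 i2 by (rule Bochner_Integration.integrable_add)
        fix x
        have pt: "w x powr p \<le> c * w x powr q + 2 powr p * h x powr p"
          using ptw[OF w0 M0 q0 \<open>q < p\<close>, of x] unfolding hw[symmetric] c_def .
        show "indicator \<Omega> x * w x powr p \<le> c * (indicator \<Omega> x * w x powr q) + 2 powr p * h x powr p"
        proof (cases "x \<in> \<Omega>")
          case True then show ?thesis using pt by simp
        next
          case False
          have "0 \<le> 2 powr p * h x powr p" by simp
          then show ?thesis using False by simp
        qed
      qed
      also have "\<dots> = c * Aq + 2 powr p * Hh"
        unfolding Aq_eq Hh_def using i1 i2 int_wq int_h by simp
      finally show ?thesis unfolding c_def .
    qed
    have twop: "2 powr p > 0" by simp
    have c1: "(a/p) * (2 powr p * M powr (p-q)) = lam/q"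
      unfolding MM using p0 q0 \<open>0 < a\<close> twop by (simp add: field_simps)
    have c2: "(a/p) * 2 powr p * (K * X) = X / (2*p)"
      unfolding KK using p0 \<open>0 < a\<close> twop by (simp add: field_simps)
    have E: "Iminus s p q a lam \<Omega> u = (1/p) * X + (lam/q) * Aq - (a/p) * Ap"
      unfolding Iminus_def XNp Ap_def Aq_def ..
    have ap0: "a/p \<ge> 0" using p0 \<open>0 < a\<close> by simp
    have "(a/p) * Ap \<le> (a/p) * (2 powr p * M powr (p-q) * Aq + 2 powr p * Hh)"
      using mult_left_mono[OF ApB ap0] .
    also have "\<dots> = ((a/p) * (2 powr p * M powr (p-q))) * Aq + (a/p) * 2 powr p * Hh"
      by (simp add: algebra_simps)
    also have "\<dots> = (lam/q) * Aq + (a/p) * 2 powr p * Hh" unfolding c1 ..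
    finally have F1: "(a/p) * Ap \<le> (lam/q) * Aq + (a/p) * 2 powr p * Hh" .
    have "(a/p) * 2 powr p * Hh \<le> (a/p) * 2 powr p * (K * X)"
      using HK mult_nonneg_nonneg[OF ap0 less_imp_le[OF twop]] by (rule mult_left_mono)
    then have F2: "(a/p) * 2 powr p * Hh \<le> X / (2*p)" using c2 by simp
    have F3: "(1/p) * X = X/(2*p) + X/(2*p)" by (simp add: field_simps)
    have F4: "X / (2*p) > 0" using Xpos p0 by simp
    show "Iminus s p q a lam \<Omega> (\<lambda>x. 0) < Iminus s p q a lam \<Omega> u"
      unfolding I0 E using F1 F2 F3 F4 by linarith
  qed
qed

end
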